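(* Let $D=(V,E;s,t)$, $N$ be as in the context and let $\widetilde\Gamma_D=(N,\tilde\gamma)$ be the auxiliary game. Then $\mathcal{C}(\widetilde\Gamma_D)=\{x\in\chi(\widetilde\Gamma_D): x(N\cap P)\ge1 \text{ for all } P\in\mathscr{P}\}$, and this set is non-empty.
   Context: $D=(V,E;s,t)$ is a directed network with unit arc capacities (parallel arcs allowed); $N\subseteq E$ is the set of private arcs (players), $M=E\setminus N$ public arcs; every $s$-$t$ path contains an arc of $N$ and every arc lies on some $s$-$t$ path. A path is a set of arcs joining a sequence of distinct vertices along the same direction; $\mathscr{P}$ is the set of all $s$-$t$ paths. For $S\subseteq N$, $\gamma(S)$ is the maximum number of pairwise arc-disjoint $s$-$t$ paths in $D_S=(V,S\cup M;s,t)$. $\sigma_N$ is the maximum number of $s$-$t$ paths pairwise sharing no arc of $N$. The auxiliary game $\widetilde\Gamma_D=(N,\tilde\gamma)$ has $\tilde\gamma(N)=\sigma_N$ and $\tilde\gamma(S)=\gamma(S)$ for $S\subsetneq N$. $x(S)=\sum_{i\in S}x_i$; $\chi(\widetilde\Gamma_D)=\{x\in\mathbb{R}^N_{\ge0}:x(N)=\sigma_N\}$; $\mathcal{C}(\widetilde\Gamma_D)=\{x\in\chi(\widetilde\Gamma_D):x(S)\ge\tilde\gamma(S)\ \forall S\subseteq N\}$. *)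

theory Defs
  imports Complex_Main "HOL-Library.FuncSet"
begin

definition is_st_path ::
  "('e \<Rightarrow> 'v) \<Rightarrow> ('e \<Rightarrow> 'v) \<Rightarrow> 'e set \<Rightarrow> 'v \<Rightarrow> 'v \<Rightarrow> 'e set \<Rightarrow> bool" where
  "is_st_path tail head A s t P \<longleftrightarrow>
     (\<exists>es vs. set es = P \<and> set es \<subseteq> A \<and> length vs = Suc (length es) \<and>
        vs ! 0 = s \<and> vs ! length es = t \<and> distinct vs \<and>
        (\<forall>i<length es. tail (es ! i) = vs ! i \<and> head (es ! i) = vs ! Suc i))"

definition st_paths ::
  "('e \<Rightarrow> 'v) \<Rightarrow> ('e \<Rightarrow> 'v) \<Rightarrow> 'e set \<Rightarrow> 'v \<Rightarrow> 'v \<Rightarrow> 'e set set" where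
  "st_paths tail head A s t = {P. is_st_path tail head A s t P}"

definition gamma ::
  "('e \<Rightarrow> 'v) \<Rightarrow> ('e \<Rightarrow> 'v) \<Rightarrow> 'e set \<Rightarrow> 'e set \<Rightarrow> 'v \<Rightarrow> 'v \<Rightarrow> 'e set \<Rightarrow> nat" where
  "gamma tail head E N s t S = Max {k. \<exists>ps. length ps = k \<and>
       (\<forall>P\<in>set ps. P \<in> st_paths tail head (S \<union> (E - N)) s t) \<and>
       (\<forall>i<k. \<forall>j<k. i \<noteq> j \<longrightarrow> ps ! i \<inter> ps ! j = {})}"

definition sigmaN ::
  "('e \<Rightarrow> 'v) \<Rightarrow> ('e \<Rightarrow> 'v) \<Rightarrow> 'e set \<Rightarrow> 'e set \<Rightarrow> 'v \<Rightarrow> 'v \<Rightarrow> nat" where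
  "sigmaN tail head E N s t = Max {k. \<exists>ps. length ps = k \<and>
       (\<forall>P\<in>set ps. P \<in> st_paths tail head E s t) \<and>
       (\<forall>i<k. \<forall>j<k. i \<noteq> j \<longrightarrow> ps ! i \<inter> ps ! j \<inter> N = {})}"

definition gamma_tilde ::
  "('e \<Rightarrow> 'v) \<Rightarrow> ('e \<Rightarrow> 'v) \<Rightarrow> 'e set \<Rightarrow> 'e set \<Rightarrow> 'v \<Rightarrow> 'v \<Rightarrow> 'e set \<Rightarrow> nat" where
  "gamma_tilde tail head E N s t S =
     (if S = N then sigmaN tail head E N s t else gamma tail head E N s t S)"

definition chi ::
  "('e \<Rightarrow> 'v) \<Rightarrow> ('e \<Rightarrow> 'v) \<Rightarrow> 'e set \<Rightarrow> 'e set \<Rightarrow> 'v \<Rightarrow> 'v \<Rightarrow> ('e \<Rightarrow> real) set" where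
  "chi tail head E N s t = {x. x \<in> extensional N \<and> (\<forall>i\<in>N. x i \<ge> 0) \<and>
       sum x N = real (sigmaN tail head E N s t)}"

definition core ::
  "('e \<Rightarrow> 'v) \<Rightarrow> ('e \<Rightarrow> 'v) \<Rightarrow> 'e set \<Rightarrow> 'e set \<Rightarrow> 'v \<Rightarrow> 'v \<Rightarrow> ('e \<Rightarrow> real) set" where
  "core tail head E N s t = {x \<in> chi tail head E N s t.
       \<forall>S. S \<subseteq> N \<longrightarrow> sum x S \<ge> real (gamma_tilde tail head E N s t S)}"

end

theory Submission
  imports Defs
begin


fun walk :: "('l \<Rightarrow> 'v) \<Rightarrow> ('l \<Rightarrow> 'v) \<Rightarrow> ('l \<Rightarrow> bool) \<Rightarrow> 'v \<Rightarrow> 'l list \<Rightarrow> 'v \<Rightarrow> bool" where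
  "walk src nxt ok u [] w = (u = w)"
| "walk src nxt ok u (l # ls) w = (ok l \<and> src l = u \<and> walk src nxt ok (nxt l) ls w)"

lemma walk_append:
  "walk src nxt ok u (xs @ ys) w = (\<exists>m. walk src nxt ok u xs m \<and> walk src nxt ok m ys w)"
  by (induction xs arbitrary: u) auto

lemma walk_mono:
  "walk src nxt ok u ls w \<Longrightarrow> (\<And>l. ok l \<Longrightarrow> ok' l) \<Longrightarrow> walk src nxt ok' u ls w"
  by (induction ls arbitrary: u) auto

lemma walk_ok: "walk src nxt ok u ls w \<Longrightarrow> l \<in> set ls \<Longrightarrow> ok l"
  by (induction ls arbitrary: u) auto

lemma walk_simple:
  assumes "(u, w) \<in> {(src l, nxt l) | l. ok l}\<^sup>*"
  shows "\<exists>ls. walk src nxt ok u ls w \<and> distinct (u # map nxt ls)"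
  using assms
proof (induction rule: rtrancl_induct)
  case base
  show ?case by (rule exI[of _ "[]"]) simp
next
  case (step y z)
  obtain ls where ls: "walk src nxt ok u ls y" "distinct (u # map nxt ls)"
    using step.IH by blast
  obtain l where l: "ok l" "src l = y" "nxt l = z" using step.hyps(2) by blast
  show ?case
  proof (cases "z \<in> set (u # map nxt ls)")
    case True
    show ?thesis
    proof (cases "z = u")
      case True
      then show ?thesis by (intro exI[of _ "[]"]) simp
    next
      case False
      then obtain l' where l': "l' \<in> set ls" "nxt l' = z" using \<open>z \<in> set (u # map nxt ls)\<close> by auto
      then obtain xs ys where xs: "ls = xs @ l' # ys" by (meson split_list)
      from ls(1) xs obtain m where m: "walk src nxt ok u xs m" "walk src nxt ok m (l' # ys) y"
        using walk_append by metis
      have "walk src nxt ok u (xs @ [l']) z" using m l' walk_append[of src nxt ok u xs "[l']" z] by auto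
      moreover have "distinct (u # map nxt (xs @ [l']))" using ls(2) xs by auto
      ultimately show ?thesis by blast
    qed
  next
    case False
    have "walk src nxt ok u (ls @ [l]) z" using ls(1) l walk_append[of src nxt ok u ls "[l]" z] by auto
    moreover have "distinct (u # map nxt (ls @ [l]))" using ls(2) False l by auto
    ultimately show ?thesis by blast
  qed
qed

lemma walk_nth:
  "walk src nxt ok u ls w \<Longrightarrow>
     (\<forall>i<length ls. ok (ls!i) \<and> src (ls!i) = (u # map nxt ls)!i \<and> nxt (ls!i) = (u # map nxt ls) ! Suc i)
     \<and> (u # map nxt ls) ! length ls = w"
proof (induction ls arbitrary: u)
  case Nil
  then show ?case by simp
next
  case (Cons l ls)
  then show ?case by (auto simp: nth_Cons split: nat.split)
qed

lemma walk_is_path: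
  assumes "walk tail head (\<lambda>e. e \<in> A) s es t" "distinct (s # map head es)"
  shows "is_st_path tail head A s t (set es)"
  unfolding is_st_path_def
proof (intro exI[of _ es] exI[of _ "s # map head es"] conjI)
  note W = walk_nth[OF assms(1)]
  show "set es \<subseteq> A" using walk_ok[OF assms(1)] by auto
  show "(s # map head es) ! length es = t" using W by blast
  show "\<forall>i<length es. tail (es ! i) = (s # map head es) ! i \<and> head (es ! i) = (s # map head es) ! Suc i"
    using W by blast
qed (use assms in auto)


lemma fam_bound:
  assumes "finite C" "\<forall>P\<in>set ps. P \<inter> C \<noteq> {}"
    "\<forall>i<length ps. \<forall>j<length ps. i \<noteq> j \<longrightarrow> ps ! i \<inter> ps ! j \<inter> C = {}"
  shows "length ps \<le> card C"
proof -
  define g where "g i = (SOME e. e \<in> ps ! i \<inter> C)" for i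
  have g: "g i \<in> ps ! i \<inter> C" if "i < length ps" for i
    unfolding g_def using assms(2) that by (metis nth_mem some_in_eq)
  have "inj_on g {..<length ps}"
    using assms(3) g unfolding inj_on_def by (metis IntI empty_iff lessThan_iff IntE)
  moreover have "g ` {..<length ps} \<subseteq> C" using g by auto
  ultimately have "card {..<length ps} \<le> card C" using card_inj_on_le assms(1) by blast
  then show ?thesis by simp
qed

definition pw :: "'e set \<Rightarrow> 'e set list \<Rightarrow> bool" where
  "pw N ps \<longleftrightarrow> (\<forall>i<length ps. \<forall>j<length ps. i \<noteq> j \<longrightarrow> ps ! i \<inter> ps ! j \<inter> N = {})"

lemma pw_Cons: "pw N (P # ps) \<longleftrightarrow> pw N ps \<and> (\<forall>Q\<in>set ps. P \<inter> Q \<inter> N = {})"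
proof
  assume H: "pw N (P # ps)"
  have "pw N ps" unfolding pw_def
  proof (intro allI impI)
    fix i j assume "i < length ps" "j < length ps" "i \<noteq> j"
    then show "ps ! i \<inter> ps ! j \<inter> N = {}" using H[unfolded pw_def, rule_format, of "Suc i" "Suc j"] by simp
  qed
  moreover have "\<forall>Q\<in>set ps. P \<inter> Q \<inter> N = {}"
  proof
    fix Q assume "Q \<in> set ps"
    then obtain j where "j < length ps" "ps ! j = Q" by (meson in_set_conv_nth)
    then show "P \<inter> Q \<inter> N = {}" using H[unfolded pw_def, rule_format, of 0 "Suc j"] by simp
  qed
  ultimately show "pw N ps \<and> (\<forall>Q\<in>set ps. P \<inter> Q \<inter> N = {})" by blast
next
  assume H: "pw N ps \<and> (\<forall>Q\<in>set ps. P \<inter> Q \<inter> N = {})"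
  show "pw N (P # ps)" unfolding pw_def
  proof (intro allI impI)
    fix i j assume ij: "i < length (P # ps)" "j < length (P # ps)" "i \<noteq> j"
    show "(P # ps) ! i \<inter> (P # ps) ! j \<inter> N = {}"
    proof (cases i)
      case 0
      then obtain j' where "j = Suc j'" "j' < length ps" using ij by (cases j) auto
      then show ?thesis using H 0 by auto
    next
      case (Suc i')
      show ?thesis
      proof (cases j)
        case 0
        then show ?thesis using H Suc ij by auto
      next
        case (Suc j')
        then show ?thesis using H \<open>i = Suc i'\<close> ij unfolding pw_def by auto
      qed
    qed
  qed
qed

lemma empty_path: "is_st_path tail head A s s {}"
  unfolding is_st_path_def by (intro exI[of _ "[]"] exI[of _ "[s]"]) auto

lemma path_mono: "is_st_path tail head A s t P \<Longrightarrow> P \<subseteq> B \<Longrightarrow> is_st_path tail head B s t P"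
  unfolding is_st_path_def by blast

lemma path_sub: "is_st_path tail head A s t P \<Longrightarrow> P \<subseteq> A"
  unfolding is_st_path_def by blast

lemma crossing:
  assumes "Q (0::nat)" "\<not> Q n"
  shows "\<exists>i<n. Q i \<and> \<not> Q (Suc i)"
  using assms
proof (induction n)
  case (Suc n)
  show ?case
  proof (cases "Q n")
    case True
    then show ?thesis using Suc.prems(2) by blast
  next
    case False
    then obtain i where "i < n" "Q i" "\<not> Q (Suc i)" using Suc.IH Suc.prems(1) by blast
    then show ?thesis using less_SucI by blast
  qed
qed simp


fun aug :: "('e \<times> bool) list \<Rightarrow> 'e \<Rightarrow> int" where
  "aug [] = (\<lambda>x. 0)"
| "aug ((e, d) # ls) = (\<lambda>x. aug ls x + (if x = e then (if d then 1 else -1) else 0))"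

lemma aug_val:
  "distinct (map fst ls) \<Longrightarrow>
     aug ls x = (if (x, True) \<in> set ls then 1 else if (x, False) \<in> set ls then -1 else 0)"
proof (induction ls)
  case Nil
  then show ?case by simp
next
  case (Cons l ls)
  obtain e d where l: "l = (e, d)" by (cases l)
  have "e \<notin> fst ` set ls" using Cons.prems l by auto
  then have "(e, True) \<notin> set ls" "(e, False) \<notin> set ls" by (force+)
  then show ?case using Cons l by auto
qed

locale netw =
  fixes V :: "'v set" and E N :: "'e set" and s t :: 'v and ta he :: "'e \<Rightarrow> 'v"
  assumes finV: "finite V" and finE: "finite E" and sV: "s \<in> V" and tV: "t \<in> V"
    and ends: "\<forall>e\<in>E. ta e \<in> V \<and> he e \<in> V" and NE: "N \<subseteq> E" and st: "s \<noteq> t"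
    and hitN: "\<forall>P\<in>st_paths ta he E s t. P \<inter> N \<noteq> {}"
begin

definition exc :: "('e \<Rightarrow> int) \<Rightarrow> 'v \<Rightarrow> int" where
  "exc f v = (\<Sum>e\<in>{e\<in>E. he e = v}. f e) - (\<Sum>e\<in>{e\<in>E. ta e = v}. f e)"

definition isflow :: "('e \<Rightarrow> int) \<Rightarrow> nat \<Rightarrow> bool" where
  "isflow f k \<longleftrightarrow> (\<forall>e\<in>E. 0 \<le> f e) \<and> (\<forall>e\<in>N. f e \<le> 1) \<and>
     (\<forall>v. v \<noteq> s \<longrightarrow> v \<noteq> t \<longrightarrow> exc f v = 0) \<and> exc f t = int k \<and> exc f s = - int k"

definition rsrc :: "'e \<times> bool \<Rightarrow> 'v" where "rsrc l = (if snd l then ta (fst l) else he (fst l))"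
definition rnxt :: "'e \<times> bool \<Rightarrow> 'v" where "rnxt l = (if snd l then he (fst l) else ta (fst l))"

lemma exc_add: "exc (\<lambda>x. f x + g x) v = exc f v + exc g v"
  unfolding exc_def by (simp add: sum.distrib)

lemma exc_diff: "exc (\<lambda>x. f x - g x) v = exc f v - exc g v"
  unfolding exc_def by (simp add: sum_subtractf)

lemma exc_single:
  "exc (\<lambda>x. if x = e then c else 0) v =
     (if e \<in> E then c * ((if he e = v then 1 else 0) - (if ta e = v then 1 else 0)) else 0)"
  unfolding exc_def using finE by (simp add: sum.delta' algebra_simps)

lemma exc_aug:
  "walk rsrc rnxt (\<lambda>l. fst l \<in> E) u ls w \<Longrightarrow>
     exc (aug ls) v = (if v = w then 1 else 0) - (if v = u then 1 else 0)"
proof (induction ls arbitrary: u)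
  case Nil
  then show ?case unfolding exc_def by simp
next
  case (Cons l ls)
  obtain e d where l: "l = (e, d)" by (cases l)
  have IH: "exc (aug ls) v = (if v = w then 1 else 0) - (if v = rnxt l then 1 else 0)"
    using Cons by simp
  have "exc (aug (l # ls)) v = exc (aug ls) v + exc (\<lambda>x. if x = e then (if d then 1 else -1) else 0) v"
    unfolding l by (simp add: exc_add)
  also have "\<dots> = (if v = w then 1 else 0) - (if v = u then 1 else 0)"
    using IH Cons.prems l by (cases d) (auto simp: exc_single rsrc_def rnxt_def)
  finally show ?case .
qed

lemma walk_distinct_fst:
  "walk rsrc rnxt ok u ls w \<Longrightarrow> distinct (u # map rnxt ls) \<Longrightarrow> distinct (map fst ls)"
proof (induction ls arbitrary: u)
  case Nil
  then show ?case by simp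
next
  case (Cons l ls)
  obtain e d where l: "l = (e, d)" by (cases l)
  have "e \<notin> fst ` set ls"
  proof
    assume "e \<in> fst ` set ls"
    then obtain d' where d': "(e, d') \<in> set ls" by force
    show False
    proof (cases "d' = d")
      case True
      have "rnxt (e, d) \<in> set (map rnxt ls)" using d' True unfolding set_map by (intro imageI) simp
      moreover have "rnxt (e, d) \<notin> set (map rnxt ls)" using Cons.prems(2) l by simp
      ultimately show False by blast
    next
      case False
      have "rsrc (e, d) = u" using Cons.prems(1) l by simp
      then have "rnxt (e, d') = u" using False by (cases d) (auto simp: rnxt_def rsrc_def)
      moreover have "rnxt (e, d') \<in> set (map rnxt ls)" using d' unfolding set_map by (rule imageI)
      moreover have "u \<notin> set (map rnxt ls)" using Cons.prems(2) l by simp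
      ultimately show False by simp
    qed
  qed
  moreover have "distinct (map fst ls)" using Cons by auto
  ultimately show ?case using l by simp
qed

lemma walk_fwd:
  "walk ta he ok u es w \<Longrightarrow> walk rsrc rnxt (\<lambda>l. ok (fst l)) u (map (\<lambda>e. (e, True)) es) w"
  by (induction es arbitrary: u) (auto simp: rsrc_def rnxt_def)

lemma cut_sum:
  assumes "finite R"
  shows "(\<Sum>v\<in>R. exc f v) = (\<Sum>e\<in>{e\<in>E. he e \<in> R \<and> ta e \<notin> R}. f e) - (\<Sum>e\<in>{e\<in>E. ta e \<in> R \<and> he e \<notin> R}. f e)"
proof -
  have A: "(\<Sum>v\<in>R. \<Sum>e\<in>{e\<in>E. g e = v}. f e) = (\<Sum>e\<in>E. if g e \<in> R then f e else 0)" for g :: "'e \<Rightarrow> 'v"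
  proof -
    have "(\<Sum>v\<in>R. \<Sum>e\<in>{e\<in>E. g e = v}. f e) = (\<Sum>v\<in>R. \<Sum>e\<in>E. if g e = v then f e else 0)"
      using finE by (simp add: sum.inter_filter)
    also have "\<dots> = (\<Sum>e\<in>E. \<Sum>v\<in>R. if g e = v then f e else 0)" by (rule sum.swap)
    also have "\<dots> = (\<Sum>e\<in>E. if g e \<in> R then f e else 0)" using assms by (simp add: sum.delta)
    finally show ?thesis .
  qed
  have "(\<Sum>v\<in>R. exc f v) = (\<Sum>e\<in>E. (if he e \<in> R then f e else 0) - (if ta e \<in> R then f e else 0))"
    unfolding exc_def by (simp add: sum_subtractf A)
  also have "\<dots> = (\<Sum>e\<in>E. (if he e \<in> R \<and> ta e \<notin> R then f e else 0) - (if ta e \<in> R \<and> he e \<notin> R then f e else 0))"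
    by (rule sum.cong) auto
  also have "\<dots> = (\<Sum>e\<in>{e\<in>E. he e \<in> R \<and> ta e \<notin> R}. f e) - (\<Sum>e\<in>{e\<in>E. ta e \<in> R \<and> he e \<notin> R}. f e)"
    using finE by (simp add: sum_subtractf sum.inter_filter)
  finally show ?thesis .
qed


lemma reach_in_V:
  assumes "(s, v) \<in> {(src l, nxt l) | l. ok l}\<^sup>*" "\<And>l. ok l \<Longrightarrow> nxt l \<in> V"
  shows "v \<in> V"
  using assms(1)
proof (induction rule: rtrancl_induct)
  case base
  then show ?case using sV by simp
next
  case (step y z)
  then show ?case using assms(2) by auto
qed

lemma decomp:
  "isflow f k \<Longrightarrow> \<exists>ps. length ps = k \<and>
     (\<forall>P\<in>set ps. P \<in> st_paths ta he E s t \<and> (\<forall>e\<in>P. 0 < f e)) \<and> pw N ps"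
proof (induction k arbitrary: f)
  case 0
  then show ?case by (intro exI[of _ "[]"]) (simp add: pw_def)
next
  case (Suc k)
  note fl = Suc.prems[unfolded isflow_def]
  define ok where "ok = (\<lambda>e. e \<in> E \<and> 0 < f e)"
  define R where "R = {v. (s, v) \<in> {(ta e, he e) | e. ok e}\<^sup>*}"
  have "t \<in> R"
  proof (rule ccontr)
    assume tR: "t \<notin> R"
    have sR: "s \<in> R" unfolding R_def by simp
    have RV: "R \<subseteq> V"
    proof
      fix v assume "v \<in> R"
      then have "(s, v) \<in> {(ta e, he e) | e. ok e}\<^sup>*" unfolding R_def by simp
      then show "v \<in> V"
        by (rule reach_in_V[where src=ta and nxt=he and ok=ok]) (use ends ok_def in auto)
    qed
    have finR: "finite R" using finV RV finite_subset by blast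
    have out0: "(\<Sum>e\<in>{e\<in>E. ta e \<in> R \<and> he e \<notin> R}. f e) = 0"
    proof (rule sum.neutral, rule ballI)
      fix e assume e: "e \<in> {e\<in>E. ta e \<in> R \<and> he e \<notin> R}"
      show "f e = 0"
      proof (rule ccontr)
        assume "f e \<noteq> 0"
        moreover have "e \<in> E" using e by simp
        moreover have "0 \<le> f e" using fl \<open>e \<in> E\<close> by blast
        ultimately have "ok e" unfolding ok_def by simp
        then have "(ta e, he e) \<in> {(ta e, he e) | e. ok e}" by blast
        moreover have "(s, ta e) \<in> {(ta e, he e) | e. ok e}\<^sup>*" using e unfolding R_def by simp
        ultimately have "he e \<in> R" unfolding R_def by (meson mem_Collect_eq rtrancl.rtrancl_into_rtrancl)
        then show False using e by simp
      qed
    qed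
    have in0: "0 \<le> (\<Sum>e\<in>{e\<in>E. he e \<in> R \<and> ta e \<notin> R}. f e)"
      by (rule sum_nonneg) (use fl in auto)
    have "(\<Sum>v\<in>R. exc f v) = exc f s + (\<Sum>v\<in>R - {s}. exc f v)"
      using sum.remove[OF finR sR] by simp
    also have "(\<Sum>v\<in>R - {s}. exc f v) = 0"
      by (rule sum.neutral) (use fl tR in auto)
    finally have "(\<Sum>v\<in>R. exc f v) = - int (Suc k)" using fl by simp
    moreover have "(\<Sum>v\<in>R. exc f v) \<ge> 0" using cut_sum[OF finR, of f] out0 in0 by simp
    ultimately show False by simp
  qed
  then have "(s, t) \<in> {(ta e, he e) | e. ok e}\<^sup>*" unfolding R_def by simp
  then have "\<exists>ls. walk ta he ok s ls t \<and> distinct (s # map he ls)"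
    by (rule walk_simple)
  then obtain es where es: "walk ta he ok s es t" "distinct (s # map he es)"
    by blast
  define P where "P = set es"
  have okP: "e \<in> E \<and> 0 < f e" if "e \<in> P" for e
  proof -
    have "ok e" using walk_ok[OF es(1)] that unfolding P_def by simp
    then show ?thesis unfolding ok_def by simp
  qed
  have wE: "walk ta he (\<lambda>e. e \<in> E) s es t"
    by (rule walk_mono[OF es(1), of "\<lambda>e. e \<in> E"]) (simp add: ok_def)
  have Ppath: "P \<in> st_paths ta he E s t"
    unfolding st_paths_def P_def using walk_is_path[OF wE es(2)] by simp
  define ls where "ls = map (\<lambda>e. (e, True)) es"
  have wl: "walk rsrc rnxt (\<lambda>l. fst l \<in> E) s ls t" unfolding ls_def using walk_fwd[OF wE] by simp
  have "map rnxt ls = map he es" unfolding ls_def by (simp add: rnxt_def)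
  then have "distinct (s # map rnxt ls)" using es(2) by simp
  then have dl: "distinct (map fst ls)" by (rule walk_distinct_fst[OF wl])
  have augv: "aug ls x = (if x \<in> P then 1 else 0)" for x
  proof -
    have 1: "(x, True) \<in> set ls \<longleftrightarrow> x \<in> P" unfolding ls_def P_def by auto
    have 2: "(x, False) \<notin> set ls" unfolding ls_def by auto
    show ?thesis using aug_val[OF dl, of x] 1 2 by simp
  qed
  define f' where "f' = (\<lambda>x. f x - aug ls x)"
  have "isflow f' k"
    unfolding isflow_def
  proof (intro conjI ballI allI impI)
    fix e assume "e \<in> E"
    then show "0 \<le> f' e" unfolding f'_def using augv fl okP by (cases "e \<in> P") auto
  next
    fix e assume "e \<in> N"
    then show "f' e \<le> 1" unfolding f'_def using augv fl by (cases "e \<in> P") auto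
  next
    fix v assume "v \<noteq> s" "v \<noteq> t"
    then show "exc f' v = 0" unfolding f'_def exc_diff exc_aug[OF wl] using fl by simp
  next
    show "exc f' t = int k" unfolding f'_def exc_diff exc_aug[OF wl] using fl st by simp
  next
    show "exc f' s = - int k" unfolding f'_def exc_diff exc_aug[OF wl] using fl st by simp
  qed
  then obtain ps where ps: "length ps = k" "\<forall>P\<in>set ps. P \<in> st_paths ta he E s t \<and> (\<forall>e\<in>P. 0 < f' e)" "pw N ps"
    using Suc.IH by blast
  have le: "f' e \<le> f e" for e unfolding f'_def using augv by simp
  have disj: "P \<inter> Q \<inter> N = {}" if "Q \<in> set ps" for Q
  proof (rule ccontr)
    assume "P \<inter> Q \<inter> N \<noteq> {}"
    then obtain e where e: "e \<in> P" "e \<in> Q" "e \<in> N" by blast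
    have "0 < f e" using okP[OF e(1)] by blast
    moreover have "f e \<le> 1" using fl e(3) by blast
    ultimately have "f e = 1" by simp
    then have "f' e = 0" unfolding f'_def using augv e(1) by simp
    moreover have "0 < f' e" using ps(2) that e(2) by blast
    ultimately show False by simp
  qed
  show ?case
  proof (intro exI[of _ "P # ps"] conjI)
    show "length (P # ps) = Suc k" using ps by simp
    show "\<forall>Q\<in>set (P # ps). Q \<in> st_paths ta he E s t \<and> (\<forall>e\<in>Q. 0 < f e)"
    proof
      fix Q assume "Q \<in> set (P # ps)"
      then consider "Q = P" | "Q \<in> set ps" by auto
      then show "Q \<in> st_paths ta he E s t \<and> (\<forall>e\<in>Q. 0 < f e)"
      proof cases
        case 1
        then show ?thesis using Ppath okP by blast
      next
        case 2
        then show ?thesis using ps(2) le by (meson less_le_trans)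
      qed
    qed
    show "pw N (P # ps)" using pw_Cons ps(3) disj by blast
  qed
qed

lemma flow_bound:
  assumes "isflow f k" shows "k \<le> card N"
proof -
  obtain ps where ps: "length ps = k" "\<forall>P\<in>set ps. P \<in> st_paths ta he E s t \<and> (\<forall>e\<in>P. 0 < f e)" "pw N ps"
    using decomp[OF assms] by blast
  have "length ps \<le> card N"
  proof (rule fam_bound)
    show "finite N" using NE finE finite_subset by blast
    show "\<forall>P\<in>set ps. P \<inter> N \<noteq> {}" using ps(2) hitN by blast
    show "\<forall>i<length ps. \<forall>j<length ps. i \<noteq> j \<longrightarrow> ps ! i \<inter> ps ! j \<inter> N = {}"
      using ps(3) unfolding pw_def by blast
  qed
  then show ?thesis using ps(1) by simp
qed

lemma zero_flow: "isflow (\<lambda>_. 0) 0"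
  unfolding isflow_def exc_def by simp

lemma mincut:
  "\<exists>C \<subseteq> N. (\<exists>f. isflow f (card C)) \<and> (\<forall>P\<in>st_paths ta he E s t. P \<inter> C \<noteq> {})"
proof -
  define K where "K = {k. \<exists>f. isflow f k}"
  have finK: "finite K"
  proof (rule finite_subset)
    show "K \<subseteq> {..card N}" unfolding K_def using flow_bound by auto
  qed simp
  have "0 \<in> K" unfolding K_def using zero_flow by blast
  define k0 where "k0 = Max K"
  have "k0 \<in> K" unfolding k0_def using finK \<open>0 \<in> K\<close> Max_in by blast
  then obtain f where f: "isflow f k0" unfolding K_def by blast
  note fl = f[unfolded isflow_def]
  define ok where "ok = (\<lambda>l. fst l \<in> E \<and> (if snd l then (fst l \<in> N \<longrightarrow> f (fst l) < 1) else 0 < f (fst l)))"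
  define R where "R = {v. (s, v) \<in> {(rsrc l, rnxt l) | l. ok l}\<^sup>*}"
  have sR: "s \<in> R" unfolding R_def by simp
  have RV: "R \<subseteq> V"
  proof
    fix v assume "v \<in> R"
    then have "(s, v) \<in> {(rsrc l, rnxt l) | l. ok l}\<^sup>*" unfolding R_def by simp
    then show "v \<in> V"
      by (rule reach_in_V[where src=rsrc and nxt=rnxt and ok=ok]) (use ends in \<open>auto simp: ok_def rnxt_def\<close>)
  qed
  have finR: "finite R" using finV RV finite_subset by blast
  have stepR: "rnxt l \<in> R" if "ok l" "rsrc l \<in> R" for l
  proof -
    have "(rsrc l, rnxt l) \<in> {(rsrc l, rnxt l) | l. ok l}" using that(1) by blast
    moreover have "(s, rsrc l) \<in> {(rsrc l, rnxt l) | l. ok l}\<^sup>*" using that(2) unfolding R_def by simp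
    ultimately show ?thesis unfolding R_def by (meson mem_Collect_eq rtrancl.rtrancl_into_rtrancl)
  qed
  have tR: "t \<notin> R"
  proof
    assume "t \<in> R"
    then have "(s, t) \<in> {(rsrc l, rnxt l) | l. ok l}\<^sup>*" unfolding R_def by simp
    then have "\<exists>ls. walk rsrc rnxt ok s ls t \<and> distinct (s # map rnxt ls)"
      by (rule walk_simple)
    then obtain ls where ls: "walk rsrc rnxt ok s ls t" "distinct (s # map rnxt ls)" by blast
    have dl: "distinct (map fst ls)" by (rule walk_distinct_fst[OF ls(1) ls(2)])
    have wE: "walk rsrc rnxt (\<lambda>l. fst l \<in> E) s ls t"
      by (rule walk_mono[OF ls(1), of "\<lambda>l. fst l \<in> E"]) (simp add: ok_def)
    have okl: "ok l" if "l \<in> set ls" for l using walk_ok[OF ls(1) that] .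
    define g where "g = (\<lambda>x. f x + aug ls x)"
    have "isflow g (Suc k0)"
      unfolding isflow_def
    proof (intro conjI ballI allI impI)
      fix e assume e: "e \<in> E"
      show "0 \<le> g e"
      proof (cases "(e, True) \<in> set ls")
        case True
        then show ?thesis unfolding g_def using aug_val[OF dl, of e] fl e by simp
      next
        case False
        note F = False
        show ?thesis
        proof (cases "(e, False) \<in> set ls")
          case True
          then have "0 < f e" using okl[OF True] unfolding ok_def by simp
          then show ?thesis unfolding g_def using aug_val[OF dl, of e] F True by simp
        next
          case False
          then show ?thesis unfolding g_def using aug_val[OF dl, of e] F fl e by simp
        qed
      qed
    next
      fix e assume e: "e \<in> N"
      show "g e \<le> 1"
      proof (cases "(e, True) \<in> set ls")
        case True
        then have "f e < 1" using okl[OF True] e unfolding ok_def by simp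
        then show ?thesis unfolding g_def using aug_val[OF dl, of e] True by simp
      next
        case False
        then show ?thesis unfolding g_def using aug_val[OF dl, of e] fl e by auto
      qed
    next
      fix v assume "v \<noteq> s" "v \<noteq> t"
      then show "exc g v = 0" unfolding g_def exc_add exc_aug[OF wE] using fl by simp
    next
      show "exc g t = int (Suc k0)" unfolding g_def exc_add exc_aug[OF wE] using fl st by simp
    next
      show "exc g s = - int (Suc k0)" unfolding g_def exc_add exc_aug[OF wE] using fl st by simp
    qed
    then have "Suc k0 \<in> K" unfolding K_def by blast
    then have "Suc k0 \<le> k0" unfolding k0_def using finK by simp
    then show False by simp
  qed
  define C where "C = {e\<in>E. ta e \<in> R \<and> he e \<notin> R}"
  have C1: "e \<in> N \<and> f e = 1" if "e \<in> C" for e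
  proof -
    have e: "e \<in> E" "ta e \<in> R" "he e \<notin> R" using that unfolding C_def by auto
    have "\<not> ok (e, True)"
    proof
      assume "ok (e, True)"
      then have "rnxt (e, True) \<in> R" using stepR e(2) by (simp add: rsrc_def)
      then show False using e(3) by (simp add: rnxt_def)
    qed
    then have "e \<in> N" "\<not> f e < 1" using e(1) unfolding ok_def by auto
    moreover have "f e \<le> 1" using fl \<open>e \<in> N\<close> by blast
    ultimately show ?thesis by simp
  qed
  have CN: "C \<subseteq> N" using C1 by blast
  have in0: "(\<Sum>e\<in>{e\<in>E. he e \<in> R \<and> ta e \<notin> R}. f e) = 0"
  proof (rule sum.neutral, rule ballI)
    fix e assume "e \<in> {e\<in>E. he e \<in> R \<and> ta e \<notin> R}"
    then have e: "e \<in> E" "he e \<in> R" "ta e \<notin> R" by auto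
    have "\<not> ok (e, False)"
    proof
      assume "ok (e, False)"
      then have "rnxt (e, False) \<in> R" using stepR e(2) by (simp add: rsrc_def)
      then show False using e(3) by (simp add: rnxt_def)
    qed
    then have "\<not> 0 < f e" using e(1) unfolding ok_def by simp
    moreover have "0 \<le> f e" using fl e(1) by blast
    ultimately show "f e = 0" by simp
  qed
  have out: "(\<Sum>e\<in>C. f e) = int (card C)"
  proof -
    have "(\<Sum>e\<in>C. f e) = (\<Sum>e\<in>C. 1)" using C1 by (intro sum.cong) auto
    then show ?thesis by simp
  qed
  have "(\<Sum>v\<in>R. exc f v) = exc f s + (\<Sum>v\<in>R - {s}. exc f v)"
    using sum.remove[OF finR sR] by simp
  also have "(\<Sum>v\<in>R - {s}. exc f v) = 0"
    by (rule sum.neutral) (use fl tR in auto)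
  finally have "(\<Sum>v\<in>R. exc f v) = - int k0" using fl by simp
  moreover have "(\<Sum>v\<in>R. exc f v) = - int (card C)"
    using cut_sum[OF finR, of f] in0 out unfolding C_def by simp
  ultimately have cardC: "card C = k0" by simp
  have cut: "P \<inter> C \<noteq> {}" if Pp: "P \<in> st_paths ta he E s t" for P
  proof -
    obtain es vs where p: "set es = P" "set es \<subseteq> E" "length vs = Suc (length es)"
      "vs ! 0 = s" "vs ! length es = t" "distinct vs"
      "\<forall>i<length es. ta (es ! i) = vs ! i \<and> he (es ! i) = vs ! Suc i"
      using Pp unfolding st_paths_def is_st_path_def by blast
    have "\<exists>i<length es. vs ! i \<in> R \<and> \<not> vs ! Suc i \<in> R"
      by (rule crossing[where Q="\<lambda>i. vs ! i \<in> R"]) (use p sR tR in auto)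
    then obtain i where i: "i < length es" "vs ! i \<in> R" "vs ! Suc i \<notin> R" by blast
    have "es ! i \<in> C" unfolding C_def using i p(2,7) nth_mem[OF i(1)] by auto
    moreover have "es ! i \<in> P" using p(1) nth_mem[OF i(1)] by auto
    ultimately show ?thesis by blast
  qed
  show ?thesis using CN cardC f cut by blast
qed
end




theorem lemma5:
  fixes V :: "'v set" and E N :: "'e set" and s t :: 'v
    and tail head :: "'e \<Rightarrow> 'v"
  assumes "finite V" and "finite E"
    and "s \<in> V" and "t \<in> V"
    and "\<forall>e\<in>E. tail e \<in> V \<and> head e \<in> V"
    and "N \<subseteq> E"
    and "\<forall>P\<in>st_paths tail head E s t. P \<inter> N \<noteq> {}"
    and "\<forall>e\<in>E. \<exists>P\<in>st_paths tail head E s t. e \<in> P"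
  shows "core tail head E N s t =
           {x \<in> chi tail head E N s t. \<forall>P\<in>st_paths tail head E s t. sum x (N \<inter> P) \<ge> 1}
         \<and> core tail head E N s t \<noteq> {}"
proof -
  have st: "s \<noteq> t"
  proof
    assume "s = t"
    then have "{} \<in> st_paths tail head E s t" unfolding st_paths_def using empty_path[of tail head E s] by simp
    then show False using assms(7) by blast
  qed
  interpret netw V E N s t tail head
    using assms st by unfold_locales auto
  have finN: "finite N" using assms(2,6) finite_subset by blast
  obtain C f0 where C: "C \<subseteq> N" "isflow f0 (card C)" "\<forall>P\<in>st_paths tail head E s t. P \<inter> C \<noteq> {}"
    using mincut by blast
  have finC: "finite C" using finN C(1) finite_subset by blast
  define Ks where "Ks = {k. \<exists>ps. length ps = k \<and>
       (\<forall>P\<in>set ps. P \<in> st_paths tail head E s t) \<and>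
       (\<forall>i<k. \<forall>j<k. i \<noteq> j \<longrightarrow> ps ! i \<inter> ps ! j \<inter> N = {})}"
  have sig: "sigmaN tail head E N s t = Max Ks" unfolding sigmaN_def Ks_def ..
  have Ks_le: "k \<le> card C" if kK: "k \<in> Ks" for k
  proof -
    obtain ps where ps: "length ps = k" "\<forall>P\<in>set ps. P \<in> st_paths tail head E s t"
      "\<forall>i<k. \<forall>j<k. i \<noteq> j \<longrightarrow> ps ! i \<inter> ps ! j \<inter> N = {}"
      using kK unfolding Ks_def by blast
    have "length ps \<le> card C"
    proof (rule fam_bound[OF finC])
      show "\<forall>P\<in>set ps. P \<inter> C \<noteq> {}" using ps(2) C(3) by blast
      show "\<forall>i<length ps. \<forall>j<length ps. i \<noteq> j \<longrightarrow> ps ! i \<inter> ps ! j \<inter> C = {}"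
      proof (intro allI impI)
        fix i j assume "i < length ps" "j < length ps" "i \<noteq> j"
        then have "ps ! i \<inter> ps ! j \<inter> N = {}" using ps(1,3) by simp
        then show "ps ! i \<inter> ps ! j \<inter> C = {}" using C(1) by blast
      qed
    qed
    then show ?thesis using ps(1) by simp
  qed
  have cK: "card C \<in> Ks"
  proof -
    obtain ps where ps: "length ps = card C" "\<forall>P\<in>set ps. P \<in> st_paths tail head E s t \<and> (\<forall>e\<in>P. 0 < f0 e)" "pw N ps"
      using decomp[OF C(2)] by blast
    have "\<forall>P\<in>set ps. P \<in> st_paths tail head E s t" using ps(2) by simp
    moreover have "\<forall>i<card C. \<forall>j<card C. i \<noteq> j \<longrightarrow> ps ! i \<inter> ps ! j \<inter> N = {}"
      using ps(3) ps(1) unfolding pw_def by simp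
    ultimately show ?thesis unfolding Ks_def using ps(1) by blast
  qed
  have finKs: "finite Ks" unfolding finite_nat_set_iff_bounded_le using Ks_le by blast
  have sigC: "sigmaN tail head E N s t = card C"
    unfolding sig by (rule Max_eqI[OF finKs Ks_le cK])
  define Kg where "Kg S = {k. \<exists>ps. length ps = k \<and>
       (\<forall>P\<in>set ps. P \<in> st_paths tail head (S \<union> (E - N)) s t) \<and>
       (\<forall>i<k. \<forall>j<k. i \<noteq> j \<longrightarrow> ps ! i \<inter> ps ! j = {})}" for S
  have gam: "gamma tail head E N s t S = Max (Kg S)" for S unfolding gamma_def Kg_def ..
  have pathE: "P \<in> st_paths tail head E s t" if SN: "S \<subseteq> N" and PS: "P \<in> st_paths tail head (S \<union> (E - N)) s t" for S P
  proof -
    have 1: "is_st_path tail head (S \<union> (E - N)) s t P" using PS unfolding st_paths_def by simp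
    have "P \<subseteq> S \<union> (E - N)" by (rule path_sub[OF 1])
    moreover have "S \<union> (E - N) \<subseteq> E" using SN assms(6) by blast
    ultimately have "P \<subseteq> E" by blast
    then have "is_st_path tail head E s t P" by (rule path_mono[OF 1])
    then show ?thesis unfolding st_paths_def by simp
  qed
  have Kg_le: "k \<le> card N" if SN: "S \<subseteq> N" and kK: "k \<in> Kg S" for S k
  proof -
    obtain ps where ps: "length ps = k" "\<forall>P\<in>set ps. P \<in> st_paths tail head (S \<union> (E - N)) s t"
      "\<forall>i<k. \<forall>j<k. i \<noteq> j \<longrightarrow> ps ! i \<inter> ps ! j = {}"
      using kK unfolding Kg_def by blast
    have "length ps \<le> card N"
    proof (rule fam_bound[OF finN])
      show "\<forall>P\<in>set ps. P \<inter> N \<noteq> {}" using ps(2) pathE[OF SN] assms(7) by blast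
      show "\<forall>i<length ps. \<forall>j<length ps. i \<noteq> j \<longrightarrow> ps ! i \<inter> ps ! j \<inter> N = {}"
        using ps(1,3) by simp
    qed
    then show ?thesis using ps(1) by simp
  qed
  have finKg: "finite (Kg S)" if "S \<subseteq> N" for S
    unfolding finite_nat_set_iff_bounded_le using Kg_le[OF that] by blast
  have Kg0: "0 \<in> Kg S" for S unfolding Kg_def by (intro CollectI exI[of _ "[]"]) simp
  define RHS where "RHS = {x \<in> chi tail head E N s t. \<forall>P\<in>st_paths tail head E s t. sum x (N \<inter> P) \<ge> 1}"
  have sub1: "core tail head E N s t \<subseteq> RHS"
  proof
    fix x assume x: "x \<in> core tail head E N s t"
    have xchi: "x \<in> chi tail head E N s t" using x unfolding core_def by blast
    have xS: "\<And>S. S \<subseteq> N \<Longrightarrow> sum x S \<ge> real (gamma_tilde tail head E N s t S)"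
      using x unfolding core_def by blast
    have "sum x (N \<inter> P) \<ge> 1" if P: "P \<in> st_paths tail head E s t" for P
    proof (cases "N \<inter> P = N")
      case True
      have "C \<noteq> {}" using C(3) P by blast
      then have "1 \<le> card C" using finC by (simp add: Suc_le_eq card_gt_0_iff)
      moreover have "sum x (N \<inter> P) \<ge> real (gamma_tilde tail head E N s t (N \<inter> P))" using xS by blast
      ultimately show ?thesis using True sigC unfolding gamma_tilde_def by simp
    next
      case False
      have P1: "is_st_path tail head E s t P" using P unfolding st_paths_def by simp
      have PE: "P \<subseteq> E" by (rule path_sub[OF P1])
      have "is_st_path tail head ((N \<inter> P) \<union> (E - N)) s t P"
        by (rule path_mono[OF P1]) (use PE in blast)
      then have "P \<in> st_paths tail head ((N \<inter> P) \<union> (E - N)) s t"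
        unfolding st_paths_def by simp
      then have "1 \<in> Kg (N \<inter> P)" unfolding Kg_def by (intro CollectI exI[of _ "[P]"]) simp
      then have "1 \<le> gamma tail head E N s t (N \<inter> P)"
        unfolding gam using finKg[of "N \<inter> P"] by simp
      moreover have "sum x (N \<inter> P) \<ge> real (gamma_tilde tail head E N s t (N \<inter> P))" using xS by blast
      ultimately show ?thesis using False unfolding gamma_tilde_def by simp
    qed
    then show "x \<in> RHS" unfolding RHS_def using xchi by blast
  qed
  have sub2: "RHS \<subseteq> core tail head E N s t"
  proof
    fix x assume x: "x \<in> RHS"
    have xchi: "x \<in> chi tail head E N s t" and xP: "\<And>P. P \<in> st_paths tail head E s t \<Longrightarrow> sum x (N \<inter> P) \<ge> 1"
      using x unfolding RHS_def by auto
    have xnn: "\<And>e. e \<in> N \<Longrightarrow> 0 \<le> x e" and xN: "sum x N = real (sigmaN tail head E N s t)"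
      using xchi unfolding chi_def by auto
    have "sum x S \<ge> real (gamma_tilde tail head E N s t S)" if S: "S \<subseteq> N" for S
    proof (cases "S = N")
      case True
      then show ?thesis using xN unfolding gamma_tilde_def by simp
    next
      case False
      define m where "m = gamma tail head E N s t S"
      have "Kg S \<noteq> {}" using Kg0 by blast
      then have "m \<in> Kg S" unfolding m_def gam by (rule Max_in[OF finKg[OF S]])
      then obtain ps where ps: "length ps = m" "\<forall>P\<in>set ps. P \<in> st_paths tail head (S \<union> (E - N)) s t"
        "\<forall>i<m. \<forall>j<m. i \<noteq> j \<longrightarrow> ps ! i \<inter> ps ! j = {}"
        unfolding Kg_def by blast
      have psi: "ps ! i \<in> st_paths tail head (S \<union> (E - N)) s t" if "i < m" for i
        using ps(1,2) that by auto
      have "real m = (\<Sum>i<m. (1::real))" by simp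
      also have "\<dots> \<le> (\<Sum>i<m. sum x (N \<inter> ps ! i))"
      proof (rule sum_mono)
        fix i assume "i \<in> {..<m}"
        then have "ps ! i \<in> st_paths tail head E s t" using pathE[OF S psi] by simp
        then show "1 \<le> sum x (N \<inter> ps ! i)" by (rule xP)
      qed
      also have "\<dots> = sum x (\<Union>i<m. N \<inter> ps ! i)"
        by (rule sum.UNION_disjoint[symmetric]) (use finN ps(3) in auto)
      also have "\<dots> \<le> sum x S"
      proof (rule sum_mono2)
        show "finite S" using finN S finite_subset by blast
        show "(\<Union>i<m. N \<inter> ps ! i) \<subseteq> S"
        proof
          fix e assume "e \<in> (\<Union>i<m. N \<inter> ps ! i)"
          then obtain i where i: "i < m" "e \<in> N" "e \<in> ps ! i" by blast
          have "is_st_path tail head (S \<union> (E - N)) s t (ps ! i)" using psi[OF i(1)] unfolding st_paths_def by simp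
          then have "ps ! i \<subseteq> S \<union> (E - N)" by (rule path_sub)
          then show "e \<in> S" using i by blast
        qed
        show "\<And>b. b \<in> S - (\<Union>i<m. N \<inter> ps ! i) \<Longrightarrow> 0 \<le> x b" using xnn S by blast
      qed
      finally show ?thesis unfolding gamma_tilde_def m_def using False by simp
    qed
    then show "x \<in> core tail head E N s t" unfolding core_def using xchi by blast
  qed
  define x0 where "x0 = (\<lambda>e. if e \<in> N then (if e \<in> C then (1::real) else 0) else undefined)"
  have x01: "x0 e = 1" if "e \<in> C" for e unfolding x0_def using that C(1) by auto
  have x00: "x0 e = 0" if "e \<in> N" "e \<notin> C" for e unfolding x0_def using that by auto
  have "x0 \<in> RHS"
  proof -
    have "x0 \<in> extensional N" unfolding x0_def extensional_def by auto
    moreover have "\<forall>i\<in>N. x0 i \<ge> 0" unfolding x0_def by simp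
    moreover have "sum x0 N = real (card C)"
    proof -
      have "sum x0 N = sum x0 (N - C) + sum x0 C" using sum.subset_diff[OF C(1) finN] by simp
      also have "sum x0 (N - C) = 0" using x00 by (intro sum.neutral) blast
      also have "sum x0 C = (\<Sum>e\<in>C. 1)" using x01 by (intro sum.cong) auto
      also have "\<dots> = real (card C)" by simp
      finally show ?thesis by simp
    qed
    moreover have "sum x0 (N \<inter> P) \<ge> 1" if P: "P \<in> st_paths tail head E s t" for P
    proof -
      obtain e where e: "e \<in> P" "e \<in> C" using C(3) P by blast
      have "x0 e \<le> sum x0 (N \<inter> P)"
        by (rule member_le_sum) (use e C(1) finN in \<open>auto simp: x0_def\<close>)
      then show ?thesis using x01[OF e(2)] by simp
    qed
    ultimately show ?thesis unfolding RHS_def chi_def using sigC by simp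
  qed
  then have "core tail head E N s t \<noteq> {}" using sub2 by blast
  moreover have "core tail head E N s t = RHS" using sub1 sub2 by (rule subset_antisym)
  ultimately show ?thesis unfolding RHS_def by simp
qed

end
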